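(* Let $p>1$, let $T_p(\mathbf{x})=\sum_{i=1}^M P(\theta_i|\mathbf{x})^{\frac{p}{p-1}}$, and define $$B_p^{(2)}=1-{\rm E}\Big[\Big(\sum_{i=1}^M P(\theta_i|\mathbf{x})^{\frac{p}{p-1}}\Big)^{\frac{p-1}{p}}\Big].$$ Then for every measurable $\zeta_2:\mathcal{X}\to(0,\infty)$ with ${\rm E}[\zeta_2(\mathbf{x})]<\infty$ and ${\rm E}\big[\zeta_2(\mathbf{x})^{\frac{1}{1-p}}T_p(\mathbf{x})\big]<\infty$, $$1-{\rm E}^{\frac1p}[\zeta_2(\mathbf{x})]\,{\rm E}^{\frac{p-1}{p}}\big[\zeta_2(\mathbf{x})^{\frac{1}{1-p}}T_p(\mathbf{x})\big]\le B_p^{(2)},$$ with equality when $\zeta_2=T_p^{\frac{p-1}{p}}$. Consequently, every detector satisfies $P_e\ge B_p^{(2)}$ for all $p>1$.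
   Context: $M$-ary hypothesis testing: the true hypothesis $\theta$ is a random variable with values in $\{\theta_1,\ldots,\theta_M\}$, $\mathbf{x}$ is a random observation in a measurable space $\mathcal{X}$, and $P(\theta_i|\mathbf{x})$ is the posterior probability of $\theta_i$ given $\mathbf{x}$, assumed to satisfy $P(\theta_i|\mathbf{x})>0$ for all $\mathbf{x}$, $i$. A detector is a measurable map $\hat\theta:\mathcal{X}\to\{\theta_1,\ldots,\theta_M\}$, and its probability of error is $P_e=\Pr(\hat\theta(\mathbf{x})\neq\theta)$. ${\rm E}^a[Y]$ denotes $({\rm E}[Y])^a$. *)

theory Defs
  imports "HOL-Probability.Probability"
begin

text \<open>Hypotheses are the elements of a finite type 'h (so M = CARD('h)).
  The observation x has marginal distribution the probability space Mx on 'x,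
  and post x h is the posterior P(h | x).\<close>

definition Tp :: "real \<Rightarrow> ('x \<Rightarrow> 'h::finite \<Rightarrow> real) \<Rightarrow> 'x \<Rightarrow> real" where
  "Tp p post x = (\<Sum>h\<in>UNIV. post x h powr (p / (p - 1)))"

definition Bp2 :: "'x measure \<Rightarrow> ('x \<Rightarrow> 'h::finite \<Rightarrow> real) \<Rightarrow> real \<Rightarrow> real" where
  "Bp2 Mx post p = 1 - (\<integral>x. (Tp p post x) powr ((p - 1) / p) \<partial>Mx)"

definition joint :: "'x measure \<Rightarrow> ('x \<Rightarrow> 'h::finite \<Rightarrow> real) \<Rightarrow> ('x \<times> 'h) measure" where
  "joint Mx post = density (Mx \<Otimes>\<^sub>M count_space UNIV) (\<lambda>(x, h). ennreal (post x h))"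

definition perr :: "'x measure \<Rightarrow> ('x \<Rightarrow> 'h::finite \<Rightarrow> real) \<Rightarrow> ('x \<Rightarrow> 'h) \<Rightarrow> real" where
  "perr Mx post d = measure (joint Mx post) {(x, h). x \<in> space Mx \<and> d x \<noteq> h}"

end

theory Submission
  imports Defs
begin

lemma holder_aux:
  fixes f g :: "'a \<Rightarrow> real"
  assumes M: "prob_space M" and ab: "\<alpha> > 0" "\<beta> > 0" "\<alpha> + \<beta> = 1"
   and fi: "integrable M f" and gi: "integrable M g"
   and fp: "\<forall>x\<in>space M. f x > 0" and gp: "\<forall>x\<in>space M. g x > 0"
   and hi: "integrable M (\<lambda>x. f x powr \<alpha> * g x powr \<beta>)"
  shows "(\<integral>x. f x powr \<alpha> * g x powr \<beta> \<partial>M) \<le> (\<integral>x. f x \<partial>M) powr \<alpha> * (\<integral>x. g x \<partial>M) powr \<beta>"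
proof -
  interpret prob_space M by fact
  have pos: "integral\<^sup>L M h > 0" if hh: "integrable M h" "\<forall>x\<in>space M. h x > 0" for h :: "'a \<Rightarrow> real"
  proof -
    have ge: "integral\<^sup>L M h \<ge> 0" using hh by (intro integral_nonneg_AE AE_I2) (auto simp: less_imp_le)
    have "integral\<^sup>L M h \<noteq> 0"
    proof
      assume "integral\<^sup>L M h = 0"
      then have "AE x in M. h x = 0" using integral_nonneg_eq_0_iff_AE[OF hh(1)] hh(2) AE_I2[of M "\<lambda>x. 0 \<le> h x"] by (auto simp: less_imp_le)
      moreover have "AE x in M. h x > 0" using hh(2) by (intro AE_I2) auto
      ultimately have "AE x in M. False" by eventually_elim auto
      then show False by simp
    qed
    with ge show ?thesis by linarith
  qed
  define A where "A = integral\<^sup>L M f"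
  define C where "C = integral\<^sup>L M g"
  have A: "A > 0" unfolding A_def using pos fi fp by blast
  have C: "C > 0" unfolding C_def using pos gi gp by blast
  define K where "K = A powr \<alpha> * C powr \<beta>"
  have K: "K > 0" using A C unfolding K_def by simp
  have pt: "f x powr \<alpha> * g x powr \<beta> \<le> K * (\<alpha> / A * f x + \<beta> / C * g x)" if x: "x \<in> space M" for x
  proof -
    have fx: "f x > 0" and gx: "g x > 0" using x fp gp by auto
    have "(f x / A) powr \<alpha> * (g x / C) powr \<beta> \<le> \<alpha> * (f x / A) + \<beta> * (g x / C)"
      using Youngs_inequality_0[of \<alpha> \<beta> "f x/A" "g x/C"] ab fx gx A C by simp
    moreover have "(f x / A) powr \<alpha> * (g x / C) powr \<beta> = f x powr \<alpha> * g x powr \<beta> / K"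
      using fx gx A C unfolding K_def by (simp add: powr_divide)
    ultimately have "f x powr \<alpha> * g x powr \<beta> / K \<le> \<alpha> / A * f x + \<beta> / C * g x" by simp
    then show ?thesis using K by (simp add: divide_le_eq mult.commute)
  qed
  have "(\<integral>x. f x powr \<alpha> * g x powr \<beta> \<partial>M) \<le> (\<integral>x. K * (\<alpha> / A * f x + \<beta> / C * g x) \<partial>M)"
    using pt fi gi hi by (intro integral_mono) auto
  also have "\<dots> = K * (\<alpha> / A * A + \<beta> / C * C)"
    using fi gi unfolding A_def C_def by simp
  also have "\<dots> = K" using A C ab by simp
  finally show ?thesis unfolding K_def A_def C_def .
qed


theorem mainTheorem6:
  fixes Mx :: "'x measure" and post :: "'x \<Rightarrow> 'h::finite \<Rightarrow> real" and p :: real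
  assumes "prob_space Mx"
    and "\<And>h. (\<lambda>x. post x h) \<in> borel_measurable Mx"
    and "\<And>x h. x \<in> space Mx \<Longrightarrow> post x h > 0"
    and "\<And>x. x \<in> space Mx \<Longrightarrow> (\<Sum>h\<in>UNIV. post x h) = 1"
    and "p > 1"
  shows "(\<forall>\<zeta>2 :: 'x \<Rightarrow> real. \<zeta>2 \<in> borel_measurable Mx \<longrightarrow> (\<forall>x\<in>space Mx. \<zeta>2 x > 0)
            \<longrightarrow> integrable Mx \<zeta>2
            \<longrightarrow> integrable Mx (\<lambda>x. \<zeta>2 x powr (1 / (1 - p)) * Tp p post x)
            \<longrightarrow> 1 - (\<integral>x. \<zeta>2 x \<partial>Mx) powr (1 / p)
                  * (\<integral>x. \<zeta>2 x powr (1 / (1 - p)) * Tp p post x \<partial>Mx) powr ((p - 1) / p)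
                \<le> Bp2 Mx post p)
       \<and> (let \<zeta>2 = (\<lambda>x. Tp p post x powr ((p - 1) / p)) in
            1 - (\<integral>x. \<zeta>2 x \<partial>Mx) powr (1 / p)
                  * (\<integral>x. \<zeta>2 x powr (1 / (1 - p)) * Tp p post x \<partial>Mx) powr ((p - 1) / p)
                = Bp2 Mx post p)
       \<and> (\<forall>d. d \<in> Mx \<rightarrow>\<^sub>M count_space UNIV \<longrightarrow> perr Mx post d \<ge> Bp2 Mx post p)"
proof -
  interpret prob_space Mx by fact
  note pm[measurable] = assms(2)
  define T where "T = Tp p post"
  define \<beta> where "\<beta> = (p - 1) / p"
  have p1: "p > 1" by fact
  have \<beta>pos: "\<beta> > 0" unfolding \<beta>_def using p1 by simp
  have Tm[measurable]: "T \<in> borel_measurable Mx" unfolding T_def Tp_def by measurable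
  have post_le1: "post x h \<le> 1" if x: "x \<in> space Mx" for x h
  proof -
    have "post x h \<le> (\<Sum>h\<in>UNIV. post x h)"
      by (rule member_le_sum) (use assms(3)[OF x] in \<open>auto simp: less_imp_le\<close>)
    then show ?thesis using assms(4)[OF x] by simp
  qed
  have Tpos: "T x > 0" if x: "x \<in> space Mx" for x
    unfolding T_def Tp_def using assms(3)[OF x] by (intro sum_pos) (auto, metis less_irrefl)
  have Tle: "T x \<le> real CARD('h)" if x: "x \<in> space Mx" for x
  proof -
    have "T x \<le> (\<Sum>h\<in>(UNIV::'h set). 1)" unfolding T_def Tp_def
      using assms(3)[OF x] post_le1[OF x] p1 by (intro sum_mono powr_le1) (auto simp: less_imp_le)
    then show ?thesis by simp
  qed
  have Ti: "integrable Mx (\<lambda>x. T x powr \<beta>)"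
  proof (rule integrable_const_bound[where B="real CARD('h) powr \<beta>"])
    show "AE x in Mx. norm (T x powr \<beta>) \<le> real CARD('h) powr \<beta>"
    proof (intro AE_I2)
      fix x assume x: "x \<in> space Mx"
      have "T x powr \<beta> \<le> real CARD('h) powr \<beta>"
        using Tpos[OF x] Tle[OF x] \<beta>pos by (intro powr_mono2) auto
      then show "norm (T x powr \<beta>) \<le> real CARD('h) powr \<beta>" by simp
    qed
  qed measurable
  have B: "Bp2 Mx post p = 1 - (\<integral>x. T x powr \<beta> \<partial>Mx)"
    unfolding Bp2_def T_def \<beta>_def ..
  have part1: "1 - (\<integral>x. z x \<partial>Mx) powr (1 / p)
                  * (\<integral>x. z x powr (1 / (1 - p)) * T x \<partial>Mx) powr \<beta>
                \<le> 1 - (\<integral>x. T x powr \<beta> \<partial>Mx)"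
    if zm: "z \<in> borel_measurable Mx" and zp: "\<forall>x\<in>space Mx. z x > 0" and zi: "integrable Mx z"
      and gi: "integrable Mx (\<lambda>x. z x powr (1 / (1 - p)) * T x)" for z
  proof -
    have eq: "z x powr (1/p) * (z x powr (1 / (1 - p)) * T x) powr \<beta> = T x powr \<beta>"
      if x: "x \<in> space Mx" for x
    proof -
      have "z x powr (1/p) * (z x powr (1 / (1 - p)) * T x) powr \<beta>
          = z x powr (1/p + 1 / (1 - p) * \<beta>) * T x powr \<beta>"
        by (simp add: powr_mult powr_powr powr_add)
      also have "1/p + 1 / (1 - p) * \<beta> = 0" unfolding \<beta>_def using p1 by (simp add: field_simps)
      finally show ?thesis using zp x by (metis less_irrefl mult_1 powr_zero_eq_one)
    qed
    have hi: "integrable Mx (\<lambda>x. z x powr (1/p) * (z x powr (1 / (1 - p)) * T x) powr \<beta>)"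
      using Ti by (subst Bochner_Integration.integrable_cong[OF refl eq]) auto
    have "(\<integral>x. z x powr (1/p) * (z x powr (1 / (1 - p)) * T x) powr \<beta> \<partial>Mx)
        \<le> (\<integral>x. z x \<partial>Mx) powr (1/p) * (\<integral>x. z x powr (1 / (1 - p)) * T x \<partial>Mx) powr \<beta>"
      using p1 \<beta>pos zi gi zp Tpos hi assms(1)
      by (intro holder_aux) (auto simp: \<beta>_def field_simps)
    moreover have "(\<integral>x. z x powr (1/p) * (z x powr (1 / (1 - p)) * T x) powr \<beta> \<partial>Mx)
        = (\<integral>x. T x powr \<beta> \<partial>Mx)"
      using eq by (intro Bochner_Integration.integral_cong) auto
    ultimately show ?thesis by simp
  qed
  have part2: "1 - (\<integral>x. T x powr \<beta> \<partial>Mx) powr (1 / p)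
                  * (\<integral>x. (T x powr \<beta>) powr (1 / (1 - p)) * T x \<partial>Mx) powr \<beta>
                = 1 - (\<integral>x. T x powr \<beta> \<partial>Mx)"
  proof -
    have "(T x powr \<beta>) powr (1 / (1 - p)) * T x = T x powr \<beta>" if x: "x \<in> space Mx" for x
    proof -
      have "(T x powr \<beta>) powr (1 / (1 - p)) * T x = T x powr (\<beta> * (1 / (1 - p)) + 1)"
        using Tpos[OF x] by (simp add: powr_powr powr_add)
      also have "\<beta> * (1 / (1 - p)) + 1 = \<beta>" unfolding \<beta>_def using p1 by (simp add: field_simps)
      finally show ?thesis .
    qed
    then have "(\<integral>x. (T x powr \<beta>) powr (1 / (1 - p)) * T x \<partial>Mx) = (\<integral>x. T x powr \<beta> \<partial>Mx)"
      by (intro Bochner_Integration.integral_cong) auto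
    moreover have "(\<integral>x. T x powr \<beta> \<partial>Mx) \<ge> 0" by (intro Bochner_Integration.integral_nonneg) auto
    moreover have "1/p + \<beta> = 1" unfolding \<beta>_def using p1 by (simp add: field_simps)
    ultimately show ?thesis by (simp flip: powr_add)
  qed
  have part3: "perr Mx post d \<ge> 1 - (\<integral>x. T x powr \<beta> \<partial>Mx)"
    if dm[measurable]: "d \<in> Mx \<rightarrow>\<^sub>M count_space UNIV" for d
  proof -
    have pd[measurable]: "(\<lambda>x. post x (d x)) \<in> borel_measurable Mx" by measurable
    have pdi: "integrable Mx (\<lambda>x. 1 - post x (d x))"
      by (rule integrable_const_bound[where B=1])
        (use assms(3) post_le1 in \<open>auto intro!: AE_I2 simp: less_imp_le\<close>)
    have pdi2: "integrable Mx (\<lambda>x. post x (d x))"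
      by (rule integrable_const_bound[where B=1])
        (use assms(3) post_le1 in \<open>auto intro!: AE_I2 simp: less_imp_le\<close>)
    define S where "S = Mx \<Otimes>\<^sub>M count_space (UNIV :: 'h set)"
    define A where "A = {(x, h). x \<in> space Mx \<and> d x \<noteq> h}"
    have A_eq: "A = {z \<in> space S. d (fst z) \<noteq> snd z}"
      unfolding A_def S_def by (auto simp: space_pair_measure)
    have Asets: "A \<in> sets S" unfolding A_eq S_def by measurable
    have fm: "(\<lambda>(x, h). ennreal (post x h)) \<in> borel_measurable S" unfolding S_def by measurable
    interpret cs: finite_measure "count_space (UNIV :: 'h set)"
      by (rule finite_measure_count_space) simp
    have "emeasure (joint Mx post) A = (\<integral>\<^sup>+ z. (\<lambda>(x, h). ennreal (post x h)) z * indicator A z \<partial>S)"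
      unfolding joint_def S_def[symmetric] by (rule emeasure_density[OF fm Asets])
    also have "\<dots> = (\<integral>\<^sup>+ x. \<integral>\<^sup>+ h. ennreal (post x h) * indicator A (x, h) \<partial>count_space UNIV \<partial>Mx)"
      unfolding S_def
      by (subst cs.nn_integral_fst[symmetric]) (use fm Asets in \<open>auto simp: S_def\<close>)
    also have "\<dots> = (\<integral>\<^sup>+ x. ennreal (1 - post x (d x)) \<partial>Mx)"
    proof (rule nn_integral_cong)
      fix x assume x: "x \<in> space Mx"
      have "(\<integral>\<^sup>+ h. ennreal (post x h) * indicator A (x, h) \<partial>count_space UNIV)
          = (\<Sum>h\<in>UNIV. ennreal (post x h * indicator A (x, h)))"
        by (subst nn_integral_count_space_finite, simp, rule sum.cong, simp, simp split: split_indicator)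
      also have "\<dots> = ennreal (\<Sum>h\<in>UNIV. post x h * indicator A (x, h))"
        using assms(3)[OF x] by (intro sum_ennreal) (auto simp: less_imp_le)
      also have "(\<Sum>h\<in>UNIV. post x h * indicator A (x, h)) = (\<Sum>h\<in>UNIV - {d x}. post x h)"
        using x by (intro sum.mono_neutral_cong_right) (auto simp: A_def)
      also have "\<dots> = 1 - post x (d x)"
        using assms(4)[OF x] by (simp add: sum_diff1)
      finally show "(\<integral>\<^sup>+ h. ennreal (post x h) * indicator A (x, h) \<partial>count_space UNIV)
          = ennreal (1 - post x (d x))" .
    qed
    also have "\<dots> = ennreal (\<integral>x. 1 - post x (d x) \<partial>Mx)"
      by (rule nn_integral_eq_integral[OF pdi])
        (use post_le1 in \<open>auto intro!: AE_I2\<close>)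
    finally have em: "emeasure (joint Mx post) A = ennreal (\<integral>x. 1 - post x (d x) \<partial>Mx)" .
    have "(\<integral>x. 1 - post x (d x) \<partial>Mx) \<ge> 0"
      by (intro Bochner_Integration.integral_nonneg) (use post_le1 in auto)
    then have "perr Mx post d = (\<integral>x. 1 - post x (d x) \<partial>Mx)"
      unfolding perr_def measure_def A_def[symmetric] em by simp
    also have "\<dots> = 1 - (\<integral>x. post x (d x) \<partial>Mx)"
      using pdi2 by (simp add: prob_space)
    finally have pe: "perr Mx post d = 1 - (\<integral>x. post x (d x) \<partial>Mx)" .
    have "(\<integral>x. post x (d x) \<partial>Mx) \<le> (\<integral>x. T x powr \<beta> \<partial>Mx)"
    proof (rule integral_mono[OF pdi2 Ti])
      fix x assume x: "x \<in> space Mx"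
      have q: "p / (p - 1) * \<beta> = 1" unfolding \<beta>_def using p1 by (simp add: field_simps)
      have "post x (d x) powr (p / (p - 1)) \<le> T x"
        unfolding T_def Tp_def
        by (rule member_le_sum[where f="\<lambda>h. post x h powr (p / (p - 1))"]) auto
      then have "(post x (d x) powr (p / (p - 1))) powr \<beta> \<le> T x powr \<beta>"
        using \<beta>pos by (intro powr_mono2) auto
      moreover have "(post x (d x) powr (p / (p - 1))) powr \<beta> = post x (d x)"
        using assms(3)[OF x] q by (simp only: powr_powr powr_one_gt_zero_iff) (simp add: less_imp_le)
      ultimately show "post x (d x) \<le> T x powr \<beta>" by simp
    qed
    then show ?thesis using pe by simp
  qed
  show ?thesis
    unfolding B Let_def using part1 part2 part3 unfolding T_def \<beta>_def by blast
qed

end
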